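(* Let $n\ge 2$. For $\vec{x}=(x_1,\dots,x_n)\in\{0,1\}^n$ and $\vec{a}=(a_1,\dots,a_n)\in\{0,1\}^n$, define the $n$-partite Popescu–Rohrlich box $P^{PR}_n(\vec a\mid\vec x)=2^{-(n-1)}$ if $\bigoplus_i a_i=\prod_i x_i$ and $0$ otherwise, the even-parity box $P^c_n(\vec a\mid \vec x)=2^{-(n-1)}$ if $\bigoplus_i a_i=0$ and $0$ otherwise, and for $0\le\varepsilon\le 1$ the correlated non-local box $P^{PR}_{n,\varepsilon}=\varepsilon P^{PR}_n+(1-\varepsilon)P^c_n$. Consider the following generalized Brunner–Skrzypczyk (BS) protocol acting on two independent copies of an $n$-partite box shared by $n$ parties: party $i$ inputs $x_i$ into the first box and receives $a_i$; party $i$ then inputs $y_i=x_i\cdot(1\oplus a_i)$ into the second box and receives $b_i$; party $i$ outputs $c_i=a_i\oplus b_i$. The resulting map $\vec x\mapsto\vec c$ defines a new $n$-partite box. Then: (1) for every $0<\varepsilon<1$, applying the generalized BS protocol to two copies of $P^{PR}_{n,\varepsilon}$ yields a box $P^{PR}_{n,\varepsilon'}$ with $\varepsilon'>\varepsilon$; (2) for every $\varepsilon>0$, iterating the protocol (applying it to $2^m$ copies of $P^{PR}_{n,\varepsilon}$ recursively, pairing up the boxes obtained at each level) yields boxes $P^{PR}_{n,\varepsilon_m}$ with $\varepsilon_m\to 1$ as $m\to\infty$, i.e. $P^{PR}_{n,\varepsilon}$ is distilled arbitrarily closely to $P^{PR}_n$.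
   Context: An $n$-partite box is a conditional probability distribution $P(\vec a\mid \vec x)$ with $n$ binary inputs and $n$ binary outputs, party $i$ holding input $x_i$ and output $a_i$; boxes used in a protocol are independent copies, and inputs to the second box may depend on the outputs of the first box at the same party (local wiring). *)

theory Defs
  imports Complex_Main
begin

text \<open>Bit strings in {0,1}^n are represented as bool lists of length n
  (True = 1). An n-partite box is a function P a x giving P(a|x),
  where a is the output vector and x the input vector.\<close>

type_synonym box = "bool list \<Rightarrow> bool list \<Rightarrow> real"

definition xor_all :: "bool list \<Rightarrow> bool" where
  "xor_all a = foldr (\<lambda>u v. u \<noteq> v) a False"

definition and_all :: "bool list \<Rightarrow> bool" where
  "and_all x = list_all id x"

definition PR_box :: "nat \<Rightarrow> box" where
  "PR_box n a x = (if xor_all a = and_all x then 1 / 2 ^ (n - 1) else 0)"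

definition even_box :: "nat \<Rightarrow> box" where
  "even_box n a x = (if xor_all a = False then 1 / 2 ^ (n - 1) else 0)"

definition PR_eps_box :: "nat \<Rightarrow> real \<Rightarrow> box" where
  "PR_eps_box n \<epsilon> a x = \<epsilon> * PR_box n a x + (1 - \<epsilon>) * even_box n a x"

text \<open>Generalized BS protocol on two independent boxes P (first) and Q (second):
  party i inputs x_i into P, gets a_i, inputs y_i = x_i(1 xor a_i) into Q,
  gets b_i and outputs c_i = a_i xor b_i.\<close>

definition BS_protocol :: "nat \<Rightarrow> box \<Rightarrow> box \<Rightarrow> box" where
  "BS_protocol n P Q c x =
     (\<Sum>a\<in>{a :: bool list. length a = n}.
        P a x * Q (map2 (\<lambda>ai ci. ai \<noteq> ci) a c) (map2 (\<lambda>xi ai. xi \<and> \<not> ai) x a))"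

definition box_eq :: "nat \<Rightarrow> box \<Rightarrow> box \<Rightarrow> bool" where
  "box_eq n P Q \<longleftrightarrow> (\<forall>a x. length a = n \<longrightarrow> length x = n \<longrightarrow> P a x = Q a x)"

definition BS_iter :: "nat \<Rightarrow> nat \<Rightarrow> box \<Rightarrow> box" where
  "BS_iter n m P = ((\<lambda>Q. BS_protocol n Q Q) ^^ m) P"

end

theory Submission imports Defs begin

lemma xor_cons[simp]: "xor_all (h # t) = (h \<noteq> xor_all t)" by (simp add: xor_all_def)
lemma xor_nil[simp]: "xor_all [] = False" by (simp add: xor_all_def)
lemma and_cons[simp]: "and_all (h # t) = (h \<and> and_all t)" by (simp add: and_all_def)
lemma and_nil[simp]: "and_all [] = True" by (simp add: and_all_def)

lemma xor_map2: "length a = length c \<Longrightarrow> xor_all (map2 (\<lambda>ai ci. ai \<noteq> ci) a c) = (xor_all a \<noteq> xor_all c)"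
  proof (induction a arbitrary: c)
  case (Cons h t) then show ?case by (cases c) auto
qed simp

lemma and_map2: "length x = length a \<Longrightarrow> and_all (map2 (\<lambda>xi ai. xi \<and> \<not> ai) x a) = (and_all x \<and> a = replicate (length a) False)"
proof (induction x arbitrary: a)
  case (Cons h t) then show ?case by (cases a) auto
qed simp

lemma xor_rep[simp]: "xor_all (replicate n False) = False" by (induction n) auto

lemma card_all: "card {a :: bool list. length a = n} = 2 ^ n"
proof -
  have "{a :: bool list. length a = n} = {xs. set xs \<subseteq> UNIV \<and> length xs = n}" by auto
  thus ?thesis using card_lists_length_eq[of "UNIV::bool set" n] card_UNIV_bool by simp
qed

lemma fin_all: "finite {a :: bool list. length a = n}"
proof -
  have "{a :: bool list. length a = n} = {xs. set xs \<subseteq> UNIV \<and> length xs = n}" by auto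
  thus ?thesis using finite_lists_length_eq[of "UNIV::bool set" n] by simp
qed

lemma card_xor: "n \<ge> 1 \<Longrightarrow> card {a. length a = n \<and> xor_all a = b} = 2 ^ (n - 1)"
proof -
  assume "n \<ge> 1"
  then obtain k where k: "n = Suc k" by (cases n) auto
  have "{a. length a = Suc k \<and> xor_all a = b} = (\<lambda>a. (b \<noteq> xor_all a) # a) ` {a. length a = k}"
  proof (rule set_eqI, rule iffI)
    fix a assume "a \<in> {a. length a = Suc k \<and> xor_all a = b}"
    then obtain h t where "a = h # t" "length t = k" "(h \<noteq> xor_all t) = b" by (auto simp: length_Suc_conv)
    thus "a \<in> (\<lambda>a. (b \<noteq> xor_all a) # a) ` {a. length a = k}" by auto
  qed auto
  moreover have "inj_on (\<lambda>a. (b \<noteq> xor_all a) # a) {a. length a = k}" by (auto simp: inj_on_def)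
  ultimately show ?thesis using k by (simp add: card_image card_all)
qed

lemma sum_split:
  fixes g :: "bool list \<Rightarrow> real"
  assumes n: "n \<ge> 1"
    and h1: "\<And>a. length a = n \<Longrightarrow> xor_all a \<Longrightarrow> g a = k1"
    and h0: "\<And>a. length a = n \<Longrightarrow> \<not> xor_all a \<Longrightarrow> a \<noteq> replicate n False \<Longrightarrow> g a = k0"
  shows "(\<Sum>a\<in>{a. length a = n}. g a) = 2^(n-1) * k1 + (2^(n-1) - 1) * k0 + g (replicate n False)"
proof -
  let ?z = "replicate n False"
  let ?A1 = "{a. length a = n \<and> xor_all a = True}"
  let ?A0 = "{a. length a = n \<and> xor_all a = False}"
  have fin: "finite ?A1" "finite ?A0" using fin_all[of n] by (auto intro: finite_subset)
  have S: "{a. length a = n} = ?A1 \<union> ?A0" by auto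
  have "(\<Sum>a\<in>{a. length a = n}. g a) = (\<Sum>a\<in>?A1. g a) + (\<Sum>a\<in>?A0. g a)"
    unfolding S by (rule sum.union_disjoint) (use fin in auto)
  also have "(\<Sum>a\<in>?A1. g a) = (\<Sum>a\<in>?A1. k1)" by (rule sum.cong) (auto simp: h1)
  also have "\<dots> = 2^(n-1) * k1" using card_xor[OF n, of True] by simp
  also have "?A0 = insert ?z (?A0 - {?z})" by auto
  also have "(\<Sum>a\<in>insert ?z (?A0 - {?z}). g a) = g ?z + (\<Sum>a\<in>?A0 - {?z}. g a)"
    by (rule sum.insert) (use fin in auto)
  also have "(\<Sum>a\<in>?A0 - {?z}. g a) = (\<Sum>a\<in>?A0 - {?z}. k0)" by (rule sum.cong) (auto simp: h0)
  also have "\<dots> = real (card (?A0 - {?z})) * k0" by simp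
  also have "card (?A0 - {?z}) = 2^(n-1) - 1" using card_xor[OF n, of False] fin by (simp add: card_Diff_singleton)
  also have "real (2^(n-1) - 1 :: nat) = 2^(n-1) - 1" by (simp add: of_nat_diff)
  finally show ?thesis by simp
qed

lemma BS_PR:
  fixes e :: real
  assumes n: "n \<ge> 1" and lc: "length c = n" and lx: "length x = n"
  shows "BS_protocol n (PR_eps_box n e) (PR_eps_box n e) c x = PR_eps_box n (e + e*(1-e)/2^(n-1)) c x"
proof -
  define N :: real where "N = 2^(n-1)"
  have N1: "N \<ge> 1" unfolding N_def by simp
  define A where "A = and_all x"
  define C where "C = xor_all c"
  define h where "h = (\<lambda>s iz. (e*(if s = A then 1/N else 0) + (1-e)*(if \<not>s then 1/N else 0)) *
     (e*(if (s \<noteq> C) = (A \<and> iz) then 1/N else 0) + (1-e)*(if \<not>(s\<noteq>C) then 1/N else 0)))"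
  have eq: "PR_eps_box n e a x * PR_eps_box n e (map2 (\<lambda>ai ci. ai \<noteq> ci) a c) (map2 (\<lambda>xi ai. xi \<and> \<not> ai) x a)
      = h (xor_all a) (a = replicate n False)" if la: "length a = n" for a
  proof -
    have l1: "length a = length c" "length x = length a" using la lc lx by auto
    show ?thesis
      unfolding PR_eps_box_def PR_box_def even_box_def xor_map2[OF l1(1)] and_map2[OF l1(2)]
      unfolding h_def N_def A_def C_def using la by simp
  qed
  have s1: "BS_protocol n (PR_eps_box n e) (PR_eps_box n e) c x = N * h True False + (N - 1) * h False False
     + PR_eps_box n e (replicate n False) x * PR_eps_box n e (map2 (\<lambda>ai ci. ai \<noteq> ci) (replicate n False) c) (map2 (\<lambda>xi ai. xi \<and> \<not> ai) x (replicate n False))"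
    unfolding BS_protocol_def N_def
  proof (rule sum_split[OF n])
    fix a :: "bool list" assume la: "length a = n" and xa: "xor_all a"
    have "a \<noteq> replicate n False" using xa by auto
    with eq[OF la] xa show "PR_eps_box n e a x * PR_eps_box n e (map2 (\<lambda>ai ci. ai \<noteq> ci) a c) (map2 (\<lambda>xi ai. xi \<and> \<not> ai) x a) = h True False"
      by simp
  next
    fix a :: "bool list" assume la: "length a = n" and xa: "\<not> xor_all a" and nz: "a \<noteq> replicate n False"
    with eq[OF la] show "PR_eps_box n e a x * PR_eps_box n e (map2 (\<lambda>ai ci. ai \<noteq> ci) a c) (map2 (\<lambda>xi ai. xi \<and> \<not> ai) x a) = h False False"
      by simp
  qed
  have s2: "PR_eps_box n e (replicate n False) x * PR_eps_box n e (map2 (\<lambda>ai ci. ai \<noteq> ci) (replicate n False) c) (map2 (\<lambda>xi ai. xi \<and> \<not> ai) x (replicate n False)) = h False True"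
      using eq[of "replicate n False"] by simp
  have s3: "N * h True False + (N - 1) * h False False + h False True = PR_eps_box n (e + e*(1-e)/2^(n-1)) c x"
    unfolding PR_eps_box_def PR_box_def even_box_def N_def[symmetric] C_def[symmetric] A_def[symmetric] h_def
    using N1 by (cases A; cases C) (simp_all add: field_simps)
  show ?thesis using s1 s2 s3 by simp
qed

lemma BS_cong: "box_eq n P P' \<Longrightarrow> box_eq n (BS_protocol n P P) (BS_protocol n P' P')"
  unfolding box_eq_def BS_protocol_def
proof (intro allI impI sum.cong refl)
  fix a x aa :: "bool list" assume h: "\<forall>a x. length a = n \<longrightarrow> length x = n \<longrightarrow> P a x = P' a x"
    "length a = n" "length x = n" "aa \<in> {a :: bool list. length a = n}"
  then show "P aa x * P (map2 (\<lambda>ai ci. ai \<noteq> ci) aa a) (map2 (\<lambda>xi ai. xi \<and> \<not> ai) x aa) =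
       P' aa x * P' (map2 (\<lambda>ai ci. ai \<noteq> ci) aa a) (map2 (\<lambda>xi ai. xi \<and> \<not> ai) x aa)"
    by simp
qed

lemma box_eq_trans: "box_eq n P Q \<Longrightarrow> box_eq n Q R \<Longrightarrow> box_eq n P R"
  unfolding box_eq_def by auto

lemma iter_eq:
  assumes n: "n \<ge> 1"
  shows "box_eq n (BS_iter n m (PR_eps_box n e))
     (PR_eps_box n (((\<lambda>e. e + e*(1-e)/2^(n-1)) ^^ m) e))"
proof (induction m)
  case 0 then show ?case by (simp add: BS_iter_def box_eq_def)
next
  case (Suc m)
  define f where "f = (\<lambda>e::real. e + e*(1-e)/2^(n-1))"
  define E where "E = (f ^^ m) e"
  define B where "B = BS_iter n m (PR_eps_box n e)"
  have IH: "box_eq n B (PR_eps_box n E)" using Suc unfolding B_def E_def f_def .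
  have 1: "BS_iter n (Suc m) (PR_eps_box n e) = BS_protocol n B B"
    unfolding BS_iter_def B_def by simp
  have 2: "(f ^^ Suc m) e = f E" unfolding E_def by simp
  have 3: "box_eq n (BS_protocol n (PR_eps_box n E) (PR_eps_box n E)) (PR_eps_box n (f E))"
    unfolding box_eq_def f_def using BS_PR[OF n] by blast
  have "box_eq n (BS_iter n (Suc m) (PR_eps_box n e)) (PR_eps_box n ((f ^^ Suc m) e))"
    unfolding 1 2 by (rule box_eq_trans[OF BS_cong[OF IH] 3])
  then show ?case unfolding f_def .
qed

theorem theorem1:
  fixes n :: nat
  assumes "n \<ge> 2"
  shows "(\<forall>\<epsilon>::real. 0 < \<epsilon> \<and> \<epsilon> < 1 \<longrightarrow>
            (\<exists>\<epsilon>'. \<epsilon> < \<epsilon>' \<and> \<epsilon>' \<le> 1 \<and>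
               box_eq n (BS_protocol n (PR_eps_box n \<epsilon>) (PR_eps_box n \<epsilon>)) (PR_eps_box n \<epsilon>')))
       \<and> (\<forall>\<epsilon>::real. 0 < \<epsilon> \<and> \<epsilon> \<le> 1 \<longrightarrow>
            (\<exists>\<epsilon>s :: nat \<Rightarrow> real.
               (\<forall>m. 0 \<le> \<epsilon>s m \<and> \<epsilon>s m \<le> 1 \<and>
                    box_eq n (BS_iter n m (PR_eps_box n \<epsilon>)) (PR_eps_box n (\<epsilon>s m)))
               \<and> \<epsilon>s \<longlonglongrightarrow> 1))"
proof -
  have n: "n \<ge> 1" using assms by simp
  define d :: real where "d = 2^(n-1)"
  have d1: "d \<ge> 1" unfolding d_def by simp
  define f where "f = (\<lambda>e::real. e + e*(1-e)/2^(n-1))"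
  have fd: "f e = e + e*(1-e)/d" for e unfolding f_def d_def by simp
  have fge: "e \<le> f e" if "0 \<le> e" "e \<le> 1" for e
    using that d1 unfolding fd by (simp add: divide_nonneg_pos)
  have fle: "f e \<le> 1" if "0 \<le> e" "e \<le> 1" for e
  proof -
    have "e * (1 - e) / d \<le> 1 - e"
    proof -
      have "e * (1 - e) \<le> (1 - e) * d" using that d1 by (simp add: mult_mono mult.commute)
      thus ?thesis using d1 by (simp add: divide_le_eq)
    qed
    thus ?thesis unfolding fd by simp
  qed
  have part1: "\<forall>\<epsilon>::real. 0 < \<epsilon> \<and> \<epsilon> < 1 \<longrightarrow>
            (\<exists>\<epsilon>'. \<epsilon> < \<epsilon>' \<and> \<epsilon>' \<le> 1 \<and>
               box_eq n (BS_protocol n (PR_eps_box n \<epsilon>) (PR_eps_box n \<epsilon>)) (PR_eps_box n \<epsilon>'))"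
  proof (intro allI impI)
    fix \<epsilon> :: real assume h: "0 < \<epsilon> \<and> \<epsilon> < 1"
    have "\<epsilon> < f \<epsilon>" using h d1 unfolding fd by simp
    moreover have "f \<epsilon> \<le> 1" using h fle by simp
    moreover have "box_eq n (BS_protocol n (PR_eps_box n \<epsilon>) (PR_eps_box n \<epsilon>)) (PR_eps_box n (f \<epsilon>))"
      unfolding box_eq_def f_def using BS_PR[OF n] by simp
    ultimately show "\<exists>\<epsilon>'. \<epsilon> < \<epsilon>' \<and> \<epsilon>' \<le> 1 \<and>
               box_eq n (BS_protocol n (PR_eps_box n \<epsilon>) (PR_eps_box n \<epsilon>)) (PR_eps_box n \<epsilon>')" by blast
  qed
  have part2: "\<forall>\<epsilon>::real. 0 < \<epsilon> \<and> \<epsilon> \<le> 1 \<longrightarrow>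
            (\<exists>\<epsilon>s :: nat \<Rightarrow> real.
               (\<forall>m. 0 \<le> \<epsilon>s m \<and> \<epsilon>s m \<le> 1 \<and>
                    box_eq n (BS_iter n m (PR_eps_box n \<epsilon>)) (PR_eps_box n (\<epsilon>s m)))
               \<and> \<epsilon>s \<longlonglongrightarrow> 1)"
  proof (intro allI impI)
    fix \<epsilon> :: real assume h: "0 < \<epsilon> \<and> \<epsilon> \<le> 1"
    define X where "X m = (f ^^ m) \<epsilon>" for m
    have XS: "X (Suc m) = f (X m)" for m unfolding X_def by simp
    have b: "\<epsilon> \<le> X m \<and> X m \<le> 1" for m
    proof (induction m)
      case 0 then show ?case using h by (simp add: X_def)
    next
      case (Suc m) then show ?case unfolding XS using fge[of "X m"] fle[of "X m"] h by auto
    qed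
    have inc: "incseq X" unfolding incseq_Suc_iff XS using fge b h
      by (meson order_trans less_imp_le)
    have bdd: "bdd_above (range X)" unfolding bdd_above_def using b by blast
    obtain L where L: "X \<longlonglongrightarrow> L" using LIMSEQ_incseq_SUP[OF bdd inc] by blast
    have "(\<lambda>m. X (Suc m)) \<longlonglongrightarrow> L" using L by (rule LIMSEQ_Suc)
    moreover have "(\<lambda>m. X (Suc m)) \<longlonglongrightarrow> f L" unfolding XS fd
      by (intro tendsto_intros L) (use d1 in simp)
    ultimately have fL: "f L = L" using LIMSEQ_unique by metis
    have "\<epsilon> \<le> L" using incseq_le[OF inc L, of 0] h by (simp add: X_def)
    have "L * (1 - L) / d = 0" using fL unfolding fd by simp
    hence "L * (1 - L) = 0" using d1 by simp
    hence "L = 1" using \<open>\<epsilon> \<le> L\<close> h by simp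
    have eqs: "box_eq n (BS_iter n m (PR_eps_box n \<epsilon>)) (PR_eps_box n (X m))" for m
      unfolding X_def f_def by (rule iter_eq[OF n])
    show "\<exists>\<epsilon>s :: nat \<Rightarrow> real.
               (\<forall>m. 0 \<le> \<epsilon>s m \<and> \<epsilon>s m \<le> 1 \<and>
                    box_eq n (BS_iter n m (PR_eps_box n \<epsilon>)) (PR_eps_box n (\<epsilon>s m)))
               \<and> \<epsilon>s \<longlonglongrightarrow> 1"
      apply (rule exI[of _ X])
      using b h eqs L \<open>L = 1\<close> by (auto intro: order_trans[OF less_imp_le])
  qed
  show ?thesis using part1 part2 by blast
qed

end
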